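(* Let $G$ and $H$ be graphs, each with at least one vertex, on disjoint vertex sets, and let $S_G$ and $S_H$ be MDNSs of $G$ and $H$, respectively. Then: (1) $\tilde\gamma_{gr}^{\times2}(G+H)=\tilde\gamma_{gr}^{\times2}(G)+\tilde\gamma_{gr}^{\times2}(H)$ and $S_G\oplus S_H$ is an MDNS of $G+H$; (2) $\tilde\gamma_{gr}^{\times2}(G\vee H)=\max\{\tilde\gamma_{gr}^{\times2}(G)+a(G),\tilde\gamma_{gr}^{\times2}(H)+a(H)\}$; moreover: (a) if $\tilde\gamma_{gr}^{\times2}(G)+a(G)\ge\tilde\gamma_{gr}^{\times2}(H)+a(H)$ and $a(G)=0$, then $S_G$ is an MDNS of $G\vee H$; (b) if $\tilde\gamma_{gr}^{\times2}(G)+a(G)\ge\tilde\gamma_{gr}^{\times2}(H)+a(H)$ and $a(G)=1$, then for any $h\in V(H)$, $S_G\oplus(h)$ is an MDNS of $G\vee H$; (c) if $\tilde\gamma_{gr}^{\times2}(G)+a(G)<\tilde\gamma_{gr}^{\times2}(H)+a(H)$ and $a(H)=0$, then $S_H$ is an MDNS of $G\vee H$; (d) if $\tilde\gamma_{gr}^{\times2}(G)+a(G)<\tilde\gamma_{gr}^{\times2}(H)+a(H)$ and $a(H)=1$, then for any $g\in V(G)$, $S_H\oplus(g)$ is an MDNS of $G\vee H$.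
   Context: Graphs are finite, simple, undirected; $N[v]$ closed neighborhood. $G+H$ is the disjoint union; $G\vee H$ is the join (disjoint union plus all edges between $V(G)$ and $V(H)$). A sequence of distinct vertices $(v_1,\dots,v_k)$ is a double neighborhood sequence (DNS) if for each $i$ some $w\in N[v_i]$ satisfies $|\{j<i:w\in N[v_j]\}|\le1$; an MDNS is a DNS of maximum length and $\tilde\gamma_{gr}^{\times2}$ is that length. $\oplus$ is concatenation. $a(X)=1$ if $X$ has an isolated vertex, $a(X)=0$ otherwise. *)

theory Defs
  imports Main
begin

definition graph :: "'a set \<Rightarrow> ('a \<Rightarrow> 'a \<Rightarrow> bool) \<Rightarrow> bool" where
  "graph V E \<longleftrightarrow> finite V \<and> (\<forall>u v. E u v \<longrightarrow> u \<in> V \<and> v \<in> V \<and> u \<noteq> v \<and> E v u)"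

definition cnbhd :: "'a set \<Rightarrow> ('a \<Rightarrow> 'a \<Rightarrow> bool) \<Rightarrow> 'a \<Rightarrow> 'a set" where
  "cnbhd V E v = {w \<in> V. w = v \<or> E v w}"

text \<open>Double neighborhood sequence (indices 0-based).\<close>
definition is_dns :: "'a set \<Rightarrow> ('a \<Rightarrow> 'a \<Rightarrow> bool) \<Rightarrow> 'a list \<Rightarrow> bool" where
  "is_dns V E xs \<longleftrightarrow> distinct xs \<and> set xs \<subseteq> V \<and>
     (\<forall>i < length xs. \<exists>w \<in> cnbhd V E (xs ! i).
        card {j. j < i \<and> w \<in> cnbhd V E (xs ! j)} \<le> 1)"

definition is_mdns :: "'a set \<Rightarrow> ('a \<Rightarrow> 'a \<Rightarrow> bool) \<Rightarrow> 'a list \<Rightarrow> bool" where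
  "is_mdns V E xs \<longleftrightarrow> is_dns V E xs \<and> (\<forall>ys. is_dns V E ys \<longrightarrow> length ys \<le> length xs)"

definition gamma_dns :: "'a set \<Rightarrow> ('a \<Rightarrow> 'a \<Rightarrow> bool) \<Rightarrow> nat" where
  "gamma_dns V E = Max {length xs | xs. is_dns V E xs}"

definition has_isolated :: "'a set \<Rightarrow> ('a \<Rightarrow> 'a \<Rightarrow> bool) \<Rightarrow> nat" where
  "has_isolated V E = (if \<exists>v \<in> V. \<forall>w. \<not> E v w then 1 else 0)"

text \<open>Disjoint union G+H and join G\<or>H (edge relations; vertex set is V1 \<union> V2).\<close>
definition union_edges :: "('a \<Rightarrow> 'a \<Rightarrow> bool) \<Rightarrow> ('a \<Rightarrow> 'a \<Rightarrow> bool) \<Rightarrow> 'a \<Rightarrow> 'a \<Rightarrow> bool" where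
  "union_edges E1 E2 u v \<longleftrightarrow> E1 u v \<or> E2 u v"

definition join_edges :: "'a set \<Rightarrow> ('a \<Rightarrow> 'a \<Rightarrow> bool) \<Rightarrow> 'a set \<Rightarrow> ('a \<Rightarrow> 'a \<Rightarrow> bool) \<Rightarrow> 'a \<Rightarrow> 'a \<Rightarrow> bool" where
  "join_edges V1 E1 V2 E2 u v \<longleftrightarrow> E1 u v \<or> E2 u v \<or> (u \<in> V1 \<and> v \<in> V2) \<or> (u \<in> V2 \<and> v \<in> V1)"

end

theory Submission
  imports Defs
begin

definition cov :: "'a set \<Rightarrow> ('a \<Rightarrow> 'a \<Rightarrow> bool) \<Rightarrow> 'a \<Rightarrow> 'a list \<Rightarrow> nat" where
  "cov V E w xs = card {y \<in> set xs. w \<in> cnbhd V E y}"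

lemma card_idx:
  assumes "distinct zs" "i \<le> length zs"
  shows "card {j. j < i \<and> P (zs!j)} = card {y \<in> set (take i zs). P y}"
proof -
  have "{j. j < i \<and> P (zs!j)} = {j. j < length (take i zs) \<and> P (take i zs ! j)}" using assms(2) by auto
  also have "card {j. j < length (take i zs) \<and> P (take i zs ! j)} = length (filter P (take i zs))"
    by (simp add: length_filter_conv_card)
  also have "\<dots> = card (set (filter P (take i zs)))" using assms(1) by (metis distinct_card distinct_filter distinct_take)
  also have "set (filter P (take i zs)) = {y \<in> set (take i zs). P y}" by auto
  finally show ?thesis .
qed

lemma dns_alt: "is_dns V E zs \<longleftrightarrow> distinct zs \<and> set zs \<subseteq> V \<and>
   (\<forall>i<length zs. \<exists>w\<in>cnbhd V E (zs!i). cov V E w (take i zs) \<le> 1)"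
proof -
  have *: "distinct zs \<Longrightarrow> i < length zs \<Longrightarrow> card {j. j < i \<and> w \<in> cnbhd V E (zs!j)} = cov V E w (take i zs)" for i w
    unfolding cov_def using card_idx[of zs i "\<lambda>y. w \<in> cnbhd V E y"] by simp
  show ?thesis unfolding is_dns_def
  proof (intro iffI conjI; (elim conjE)?)
    assume a: "distinct zs" "set zs \<subseteq> V" "\<forall>i<length zs. \<exists>w\<in>cnbhd V E (zs ! i). card {j. j < i \<and> w \<in> cnbhd V E (zs ! j)} \<le> 1"
    then show "\<forall>i<length zs. \<exists>w\<in>cnbhd V E (zs!i). cov V E w (take i zs) \<le> 1" using * by metis
  next
    assume a: "distinct zs" "set zs \<subseteq> V" "\<forall>i<length zs. \<exists>w\<in>cnbhd V E (zs!i). cov V E w (take i zs) \<le> 1"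
    then show "\<forall>i<length zs. \<exists>w\<in>cnbhd V E (zs ! i). card {j. j < i \<and> w \<in> cnbhd V E (zs ! j)} \<le> 1" using * by metis
  qed auto
qed

lemma dns_Nil[simp]: "is_dns V E []" by (simp add: is_dns_def)

lemma dns_snoc: "is_dns V E (xs@[x]) \<longleftrightarrow> is_dns V E xs \<and> x \<notin> set xs \<and> x \<in> V \<and> (\<exists>w\<in>cnbhd V E x. cov V E w xs \<le> 1)"
proof -
  have e: "(\<forall>i<length (xs@[x]). \<exists>w\<in>cnbhd V E ((xs@[x])!i). cov V E w (take i (xs@[x])) \<le> 1)
     \<longleftrightarrow> (\<forall>i<length xs. \<exists>w\<in>cnbhd V E (xs!i). cov V E w (take i xs) \<le> 1) \<and> (\<exists>w\<in>cnbhd V E x. cov V E w xs \<le> 1)"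
    by (auto simp: nth_append less_Suc_eq)
  show ?thesis unfolding dns_alt[of V E "xs@[x]"] dns_alt[of V E xs] e by auto
qed

lemma dns_snocI: "is_dns V E xs \<Longrightarrow> x \<notin> set xs \<Longrightarrow> x \<in> V \<Longrightarrow> w \<in> cnbhd V E x \<Longrightarrow> cov V E w xs \<le> 1 \<Longrightarrow> is_dns V E (xs@[x])"
  unfolding dns_snoc by blast

lemma cnbhd_self: "v \<in> V \<Longrightarrow> v \<in> cnbhd V E v" by (simp add: cnbhd_def)
lemma cnbhd_sub: "cnbhd V E v \<subseteq> V" by (auto simp: cnbhd_def)

lemma dns_len: "is_dns V E xs \<Longrightarrow> length xs = card (set xs)"
  by (simp add: is_dns_def distinct_card)

lemma gamma_ge: assumes "finite V" "is_dns V E xs" shows "length xs \<le> gamma_dns V E"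
proof -
  have "{length xs |xs. is_dns V E xs} \<subseteq> {..card V}"
    using assms(1) by (auto simp: is_dns_def) (metis distinct_card card_mono)
  then have "finite {length xs |xs. is_dns V E xs}" by (rule finite_subset) simp
  then show ?thesis unfolding gamma_dns_def using assms(2) by (auto intro: Max_ge)
qed

lemma gamma_ex: assumes "finite V" shows "\<exists>xs. is_dns V E xs \<and> length xs = gamma_dns V E"
proof -
  have "{length xs |xs. is_dns V E xs} \<subseteq> {..card V}"
    using assms(1) by (auto simp: is_dns_def) (metis distinct_card card_mono)
  then have "finite {length xs |xs. is_dns V E xs}" by (rule finite_subset) simp
  moreover have "{length xs |xs. is_dns V E xs} \<noteq> {}" using dns_Nil by blast
  ultimately have "gamma_dns V E \<in> {length xs |xs. is_dns V E xs}" unfolding gamma_dns_def by (rule Max_in)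
  then show ?thesis by auto
qed

lemma mdns_iff: assumes "finite V" shows "is_mdns V E S \<longleftrightarrow> is_dns V E S \<and> length S = gamma_dns V E"
  using gamma_ge[OF assms] gamma_ex[OF assms, of E] unfolding is_mdns_def by (metis le_antisym)

lemma cov_snoc_le: "cov V E w (xs@[x]) \<le> cov V E w xs + 1"
proof -
  have "{y \<in> set (xs@[x]). w \<in> cnbhd V E y} \<subseteq> insert x {y \<in> set xs. w \<in> cnbhd V E y}" by auto
  then have "cov V E w (xs@[x]) \<le> card (insert x {y \<in> set xs. w \<in> cnbhd V E y})"
    unfolding cov_def by (intro card_mono) auto
  also have "\<dots> \<le> cov V E w xs + 1" unfolding cov_def by (simp add: card_insert_if)
  finally show ?thesis .
qed

lemma iso01: "has_isolated V E = 0 \<or> has_isolated V E = 1" by (simp add: has_isolated_def)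

lemma E1: assumes g: "graph V E" and d: "is_dns V E A" and w: "w \<in> V" and c: "cov V E w A \<le> 1"
  shows "length A + 1 \<le> gamma_dns V E + has_isolated V E"
proof -
  have fin: "finite V" using g by (simp add: graph_def)
  show ?thesis
  proof (cases "w \<in> set A")
    case False
    have "w \<in> cnbhd V E w" using w by (rule cnbhd_self)
    then have "is_dns V E (A@[w])" using d False w c by (auto simp: dns_snoc)
    from gamma_ge[OF fin this] show ?thesis by simp
  next
    case True
    show ?thesis
    proof (cases "\<exists>w'. E w w'")
      case True
      then obtain w' where e: "E w w'" by blast
      have ew: "w' \<in> V" "w' \<noteq> w" "E w' w" using g e by (auto simp: graph_def)
      have nA: "w' \<notin> set A"
      proof
        assume "w' \<in> set A"
        then have "{w, w'} \<subseteq> {y \<in> set A. w \<in> cnbhd V E y}" using \<open>w \<in> set A\<close> w ew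
          by (auto simp: cnbhd_def)
        then have "card {w, w'} \<le> cov V E w A" unfolding cov_def by (intro card_mono) auto
        then show False using c ew by simp
      qed
      have "w \<in> cnbhd V E w'" using ew w by (simp add: cnbhd_def)
      then have "is_dns V E (A@[w'])" using d nA ew c by (auto simp: dns_snoc)
      from gamma_ge[OF fin this] show ?thesis by simp
    next
      case False
      then have "has_isolated V E = 1" using w by (auto simp: has_isolated_def)
      with gamma_ge[OF fin d] show ?thesis by simp
    qed
  qed
qed

lemma E2: assumes g: "graph V E" and d: "is_dns V E A" and w: "w \<in> V" and c: "cov V E w A = 0"
  shows "length A + 2 \<le> gamma_dns V E + has_isolated V E"
proof -
  have nA: "w \<notin> set A"
  proof
    assume "w \<in> set A"
    then have "w \<in> {y \<in> set A. w \<in> cnbhd V E y}" using w by (simp add: cnbhd_def)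
    then have "cov V E w A \<noteq> 0" unfolding cov_def by (metis (no_types, lifting) card_0_eq empty_iff finite_set finite_subset mem_Collect_eq subsetI)
    then show False using c by simp
  qed
  have "w \<in> cnbhd V E w" using w by (rule cnbhd_self)
  then have d2: "is_dns V E (A@[w])" using d nA w c unfolding dns_snoc by (metis le0)
  have "cov V E w (A@[w]) \<le> 1" using cov_snoc_le[of V E w A w] c by simp
  from E1[OF g d2 w this] show ?thesis by simp
qed


lemma join_sym: "join_edges V2 E2 V1 E1 = join_edges V1 E1 V2 E2"
  by (intro ext) (auto simp: join_edges_def)
lemma union_sym: "union_edges E2 E1 = union_edges E1 E2"
  by (intro ext) (auto simp: union_edges_def)

locale two =
  fixes V1 V2 :: "'a set" and E1 E2 :: "'a \<Rightarrow> 'a \<Rightarrow> bool"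
  assumes g1: "graph V1 E1" and g2: "graph V2 E2" and ne1: "V1 \<noteq> {}" and ne2: "V2 \<noteq> {}"
    and disj: "V1 \<inter> V2 = {}"
begin

abbreviation "EJ \<equiv> join_edges V1 E1 V2 E2"
abbreviation "EU \<equiv> union_edges E1 E2"
abbreviation "V \<equiv> V1 \<union> V2"

lemma finV: "finite V" "finite V1" "finite V2" using g1 g2 by (auto simp: graph_def)

lemma e1: "E1 u v \<Longrightarrow> u \<in> V1 \<and> v \<in> V1 \<and> u \<noteq> v \<and> E1 v u" using g1 by (simp add: graph_def)
lemma e2: "E2 u v \<Longrightarrow> u \<in> V2 \<and> v \<in> V2 \<and> u \<noteq> v \<and> E2 v u" using g2 by (simp add: graph_def)

lemma e1a: "E1 u v \<Longrightarrow> u \<in> V1" and e1b: "E1 u v \<Longrightarrow> v \<in> V1"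
  and e2a: "E2 u v \<Longrightarrow> u \<in> V2" and e2b: "E2 u v \<Longrightarrow> v \<in> V2" using e1 e2 by auto

lemma nJ1: "v \<in> V1 \<Longrightarrow> cnbhd V EJ v = cnbhd V1 E1 v \<union> V2"
  using disj e1a e1b e2a e2b by (auto simp: cnbhd_def join_edges_def)
lemma nJ2: "v \<in> V2 \<Longrightarrow> cnbhd V EJ v = cnbhd V2 E2 v \<union> V1"
  using disj e1a e1b e2a e2b by (auto simp: cnbhd_def join_edges_def)
lemma nU1: "v \<in> V1 \<Longrightarrow> cnbhd V EU v = cnbhd V1 E1 v"
  using disj e1a e1b e2a e2b by (auto simp: cnbhd_def union_edges_def)
lemma nU2: "v \<in> V2 \<Longrightarrow> cnbhd V EU v = cnbhd V2 E2 v"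
  using disj e1a e1b e2a e2b by (auto simp: cnbhd_def union_edges_def)

lemma U_filter: "is_dns V EU xs \<Longrightarrow> is_dns V1 E1 (filter (\<lambda>y. y \<in> V1) xs)"
proof (induction xs rule: rev_induct)
  case Nil then show ?case by simp
next
  case (snoc x xs)
  from snoc.prems have d: "is_dns V EU xs" and nx: "x \<notin> set xs" and xV: "x \<in> V"
    and ex: "\<exists>w\<in>cnbhd V EU x. cov V EU w xs \<le> 1" by (auto simp: dns_snoc)
  have IH: "is_dns V1 E1 (filter (\<lambda>y. y \<in> V1) xs)" using snoc.IH d by blast
  show ?case
  proof (cases "x \<in> V1")
    case True
    obtain w where w: "w \<in> cnbhd V EU x" "cov V EU w xs \<le> 1" using ex by blast
    have w1: "w \<in> cnbhd V1 E1 x" using w nU1[OF True] by simp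
    have "{y \<in> set (filter (\<lambda>y. y \<in> V1) xs). w \<in> cnbhd V1 E1 y} \<subseteq> {y \<in> set xs. w \<in> cnbhd V EU y}"
      using nU1 by auto
    then have "cov V1 E1 w (filter (\<lambda>y. y \<in> V1) xs) \<le> cov V EU w xs" unfolding cov_def
      by (intro card_mono) auto
    then show ?thesis using True IH nx w w1 by (auto intro!: dns_snocI)
  next
    case False then show ?thesis using IH by simp
  qed
qed

lemma U_1: "is_dns V1 E1 A \<Longrightarrow> is_dns V EU A"
proof (induction A rule: rev_induct)
  case Nil then show ?case by simp
next
  case (snoc x xs)
  from snoc.prems have d: "is_dns V1 E1 xs" and nx: "x \<notin> set xs" and xV: "x \<in> V1"
    and ex: "\<exists>w\<in>cnbhd V1 E1 x. cov V1 E1 w xs \<le> 1" by (auto simp: dns_snoc)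
  have s: "set xs \<subseteq> V1" using d by (simp add: is_dns_def)
  obtain w where w: "w \<in> cnbhd V1 E1 x" "cov V1 E1 w xs \<le> 1" using ex by blast
  have "{y \<in> set xs. w \<in> cnbhd V EU y} = {y \<in> set xs. w \<in> cnbhd V1 E1 y}" using s nU1 by auto
  then have "cov V EU w xs = cov V1 E1 w xs" by (simp add: cov_def)
  then show ?case using snoc.IH[OF d] nx xV w nU1[OF xV] by (auto intro!: dns_snocI)
qed

lemma U_app: assumes a: "is_dns V1 E1 A" shows "is_dns V2 E2 B \<Longrightarrow> is_dns V EU (A @ B)"
proof (induction B rule: rev_induct)
  case Nil then show ?case using U_1[OF a] by simp
next
  case (snoc x xs)
  from snoc.prems have d: "is_dns V2 E2 xs" and nx: "x \<notin> set xs" and xV: "x \<in> V2"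
    and ex: "\<exists>w\<in>cnbhd V2 E2 x. cov V2 E2 w xs \<le> 1" by (auto simp: dns_snoc)
  have s: "set xs \<subseteq> V2" using d by (simp add: is_dns_def)
  have sA: "set A \<subseteq> V1" using a by (simp add: is_dns_def)
  obtain w where w: "w \<in> cnbhd V2 E2 x" "cov V2 E2 w xs \<le> 1" using ex by blast
  have wV: "w \<in> V2" using w(1) by (simp add: cnbhd_def)
  have "{y \<in> set (A@xs). w \<in> cnbhd V EU y} = {y \<in> set xs. w \<in> cnbhd V2 E2 y}"
  proof -
    have n1: "w \<notin> cnbhd V EU y" if "y \<in> set A" for y
    proof -
      have "y \<in> V1" using sA that by blast
      then have "cnbhd V EU y \<subseteq> V1" using nU1[of y] cnbhd_sub[of V1 E1 y] by simp
      then show ?thesis using wV disj by blast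
    qed
    have n2: "cnbhd V EU y = cnbhd V2 E2 y" if "y \<in> set xs" for y using nU2 s that by blast
    show ?thesis
    proof (intro set_eqI iffI)
      fix y assume "y \<in> {y \<in> set (A@xs). w \<in> cnbhd V EU y}"
      then show "y \<in> {y \<in> set xs. w \<in> cnbhd V2 E2 y}" using n1 n2 by auto
    next
      fix y assume "y \<in> {y \<in> set xs. w \<in> cnbhd V2 E2 y}"
      then show "y \<in> {y \<in> set (A@xs). w \<in> cnbhd V EU y}" using n2 by auto
    qed
  qed
  then have c: "cov V EU w (A@xs) = cov V2 E2 w xs" by (simp add: cov_def)
  have xA: "x \<notin> set A" using sA xV disj by auto
  have xA2: "x \<notin> set (A@xs)" using nx xA by simp
  have xV': "x \<in> V" using xV by simp
  have wJ: "w \<in> cnbhd V EU x" using w nU2[OF xV] by simp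
  have "is_dns V EU ((A@xs)@[x])" using dns_snocI[OF snoc.IH[OF d] xA2 xV' wJ] c w(2) by simp
  then show ?case by simp
qed

lemma J_G: "is_dns V1 E1 A \<Longrightarrow> is_dns V EJ A"
proof (induction A rule: rev_induct)
  case Nil then show ?case by simp
next
  case (snoc x xs)
  from snoc.prems have d: "is_dns V1 E1 xs" and nx: "x \<notin> set xs" and xV: "x \<in> V1"
    and ex: "\<exists>w\<in>cnbhd V1 E1 x. cov V1 E1 w xs \<le> 1" by (auto simp: dns_snoc)
  have s: "set xs \<subseteq> V1" using d by (simp add: is_dns_def)
  obtain w where w: "w \<in> cnbhd V1 E1 x" "cov V1 E1 w xs \<le> 1" using ex by blast
  have wV: "w \<in> V1" using w(1) by (simp add: cnbhd_def)
  have "{y \<in> set xs. w \<in> cnbhd V EJ y} = {y \<in> set xs. w \<in> cnbhd V1 E1 y}" using s nJ1 wV disj by auto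
  then have "cov V EJ w xs = cov V1 E1 w xs" by (simp add: cov_def)
  then show ?case using snoc.IH[OF d] nx xV w nJ1[OF xV] by (auto intro!: dns_snocI)
qed

lemma J_iso: assumes a: "is_dns V1 E1 A" and i: "has_isolated V1 E1 = 1" and h: "h \<in> V2"
  shows "is_dns V EJ (A@[h])"
proof -
  obtain u where u: "u \<in> V1" "\<forall>w. \<not> E1 u w" using i by (auto simp: has_isolated_def split: if_splits)
  have sA: "set A \<subseteq> V1" using a by (simp add: is_dns_def)
  have "{y \<in> set A. u \<in> cnbhd V EJ y} \<subseteq> {u}"
  proof
    fix y assume y: "y \<in> {y \<in> set A. u \<in> cnbhd V EJ y}"
    have yV: "y \<in> V1" using sA y by auto
    have "u \<in> cnbhd V1 E1 y \<union> V2" using y nJ1[OF yV] by simp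
    then have "u \<in> cnbhd V1 E1 y" using u(1) disj by blast
    then have "u = y \<or> E1 y u" by (simp add: cnbhd_def)
    then show "y \<in> {u}" using u(2) e1[of y u] by auto
  qed
  then have "cov V EJ u A \<le> 1" unfolding cov_def using card_mono[of "{u}"] by fastforce
  moreover have "u \<in> cnbhd V EJ h" using nJ2[OF h] u by simp
  moreover have "h \<notin> set A" using sA h disj by auto
  ultimately show ?thesis using J_G[OF a] h by (auto intro!: dns_snocI)
qed

lemma J_filter: "is_dns V EJ xs \<Longrightarrow> is_dns V1 E1 (filter (\<lambda>y. y \<in> V1) xs)"
proof (induction xs rule: rev_induct)
  case Nil then show ?case by simp
next
  case (snoc x xs)
  from snoc.prems have d: "is_dns V EJ xs" and nx: "x \<notin> set xs" and xV: "x \<in> V"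
    and ex: "\<exists>w\<in>cnbhd V EJ x. cov V EJ w xs \<le> 1" by (auto simp: dns_snoc)
  have IH: "is_dns V1 E1 (filter (\<lambda>y. y \<in> V1) xs)" using snoc.IH d by blast
  show ?case
  proof (cases "x \<in> V1")
    case True
    obtain w where w: "w \<in> cnbhd V EJ x" "cov V EJ w xs \<le> 1" using ex by blast
    have "\<exists>w\<in>cnbhd V1 E1 x. cov V1 E1 w (filter (\<lambda>y. y \<in> V1) xs) \<le> 1"
    proof (cases "w \<in> cnbhd V1 E1 x")
      case True
      have "{y \<in> set (filter (\<lambda>y. y \<in> V1) xs). w \<in> cnbhd V1 E1 y} \<subseteq> {y \<in> set xs. w \<in> cnbhd V EJ y}"
        using nJ1 by auto
      then have "cov V1 E1 w (filter (\<lambda>y. y \<in> V1) xs) \<le> cov V EJ w xs" unfolding cov_def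
        by (intro card_mono) auto
      then show ?thesis using True w by (intro bexI[of _ w]) auto
    next
      case False
      then have wV: "w \<in> V2" using w nJ1[OF \<open>x \<in> V1\<close>] by auto
      have "set (filter (\<lambda>y. y \<in> V1) xs) \<subseteq> {y \<in> set xs. w \<in> cnbhd V EJ y}"
        using nJ1 wV by auto
      then have c1: "card (set (filter (\<lambda>y. y \<in> V1) xs)) \<le> 1" using w(2) unfolding cov_def
        by (metis (no_types, lifting) card_mono finite_set finite_subset le_trans mem_Collect_eq subsetI)
      have "cov V1 E1 x (filter (\<lambda>y. y \<in> V1) xs) \<le> card (set (filter (\<lambda>y. y \<in> V1) xs))"
        unfolding cov_def by (intro card_mono) auto
      then show ?thesis using c1 cnbhd_self[OF \<open>x \<in> V1\<close>, of E1] by (intro bexI[of _ x]) auto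
    qed
    then show ?thesis using True IH nx by (auto simp: dns_snoc)
  next
    case False then show ?thesis using IH by simp
  qed
qed


lemma J_half: assumes d: "is_dns V EJ (xs@[x])" and w: "w \<in> cnbhd V EJ x" "w \<in> V1" "cov V EJ w xs \<le> 1"
  shows "length (xs@[x]) \<le> gamma_dns V1 E1 + has_isolated V1 E1"
proof -
  let ?A = "filter (\<lambda>y. y \<in> V1) xs"
  let ?B = "filter (\<lambda>y. y \<in> V2) xs"
  have dxs: "is_dns V EJ xs" and nx: "x \<notin> set xs" and xV: "x \<in> V" using d unfolding dns_snoc by blast+
  have dist: "distinct xs" and sxs: "set xs \<subseteq> V" using dxs by (auto simp: is_dns_def)
  have dA: "is_dns V1 E1 ?A" by (rule J_filter[OF dxs])
  have lenB: "length ?B = card (set ?B)" using dist by (metis distinct_card distinct_filter)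
  have wn2: "w \<notin> V2" using w(2) disj by blast
  have spl: "{y \<in> set xs. w \<in> cnbhd V EJ y} = {y \<in> set ?A. w \<in> cnbhd V1 E1 y} \<union> set ?B"
  proof (intro set_eqI iffI)
    fix y assume y: "y \<in> {y \<in> set xs. w \<in> cnbhd V EJ y}"
    show "y \<in> {y \<in> set ?A. w \<in> cnbhd V1 E1 y} \<union> set ?B"
    proof (cases "y \<in> V1")
      case True
      then show ?thesis using y nJ1[OF True] wn2 by auto
    next
      case False
      then show ?thesis using y sxs by auto
    qed
  next
    fix y assume y: "y \<in> {y \<in> set ?A. w \<in> cnbhd V1 E1 y} \<union> set ?B"
    show "y \<in> {y \<in> set xs. w \<in> cnbhd V EJ y}"
    proof (cases "y \<in> V1")
      case True
      then show ?thesis using y nJ1[OF True] disj by auto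
    next
      case False
      then have "y \<in> set xs" "y \<in> V2" using y by auto
      then show ?thesis using nJ2[of y] w(2) by auto
    qed
  qed
  have dj: "{y \<in> set ?A. w \<in> cnbhd V1 E1 y} \<inter> set ?B = {}" using disj by auto
  have cs: "cov V EJ w xs = cov V1 E1 w ?A + length ?B"
    unfolding cov_def spl lenB by (rule card_Un_disjoint) (use dj in auto)
  have fc: "filter (\<lambda>y. \<not> y \<in> V1) xs = ?B" using sxs disj by (intro filter_cong) auto
  have len: "length xs = length ?A + length ?B" using sum_length_filter_compl[of "\<lambda>y. y \<in> V1" xs] fc by simp
  have cB: "cov V1 E1 w ?A + length ?B \<le> 1" using cs w(3) by simp
  have g: "graph V1 E1" by (rule g1)
  show ?thesis
  proof (cases "x \<in> V1")
    case True
    have fA: "filter (\<lambda>y. y \<in> V1) (xs@[x]) = ?A @ [x]" using True by simp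
    have dA2: "is_dns V1 E1 (?A @ [x])" using J_filter[OF d] fA by simp
    show ?thesis
    proof (cases "length ?B = 0")
      case True
      then show ?thesis using gamma_ge[OF finV(2) dA2] len by simp
    next
      case False
      then have "length ?B = 1" "cov V1 E1 w ?A = 0" using cB by linarith+
      moreover have "cov V1 E1 w (?A@[x]) \<le> cov V1 E1 w ?A + 1" by (rule cov_snoc_le)
      ultimately have "cov V1 E1 w (?A@[x]) \<le> 1" by simp
      from E1[OF g dA2 w(2) this] show ?thesis using len \<open>length ?B = 1\<close> by simp
    qed
  next
    case False
    show ?thesis
    proof (cases "length ?B = 0")
      case True
      then have "cov V1 E1 w ?A \<le> 1" using cB by simp
      from E1[OF g dA w(2) this] show ?thesis using len True by simp
    next
      case False
      then have "length ?B = 1" "cov V1 E1 w ?A = 0" using cB by linarith+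
      from E2[OF g dA w(2) this(2)] show ?thesis using len \<open>length ?B = 1\<close> by simp
    qed
  qed
qed

lemma swap_two: "two V2 V1 E2 E1"
  using g1 g2 ne1 ne2 disj by (unfold_locales) auto

lemma eqs: "V2 \<union> V1 = V1 \<union> V2" "join_edges V2 E2 V1 E1 = join_edges V1 E1 V2 E2"
  "union_edges E2 E1 = union_edges E1 E2"
  by (auto simp: join_sym union_sym)

lemma J_upper: assumes d: "is_dns V EJ S"
  shows "length S \<le> max (gamma_dns V1 E1 + has_isolated V1 E1) (gamma_dns V2 E2 + has_isolated V2 E2)"
proof (cases S rule: rev_exhaust)
  case Nil then show ?thesis by simp
next
  case (snoc xs x)
  then have d': "is_dns V EJ (xs@[x])" using d by simp
  then obtain w where w: "w \<in> cnbhd V EJ x" "cov V EJ w xs \<le> 1" unfolding dns_snoc by blast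
  have "w \<in> V" using w(1) by (simp add: cnbhd_def)
  then show ?thesis
  proof
    assume "w \<in> V1"
    from J_half[OF d' w(1) this w(2)] show ?thesis using snoc by simp
  next
    assume w2: "w \<in> V2"
    interpret sw: two V2 V1 E2 E1 by (rule swap_two)
    have "length (xs@[x]) \<le> gamma_dns V2 E2 + has_isolated V2 E2"
      using sw.J_half[unfolded eqs, OF d' w(1) w2 w(2)] .
    then show ?thesis using snoc by simp
  qed
qed

lemma J_main: assumes m: "is_mdns V1 E1 S1"
  and le: "gamma_dns V2 E2 + has_isolated V2 E2 \<le> gamma_dns V1 E1 + has_isolated V1 E1"
  shows "gamma_dns V EJ = gamma_dns V1 E1 + has_isolated V1 E1
    \<and> (has_isolated V1 E1 = 0 \<longrightarrow> is_mdns V EJ S1)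
    \<and> (has_isolated V1 E1 = 1 \<longrightarrow> (\<forall>h\<in>V2. is_mdns V EJ (S1@[h])))"
proof -
  have dS: "is_dns V1 E1 S1" and lS: "length S1 = gamma_dns V1 E1" using m mdns_iff[OF finV(2)] by auto
  obtain S0 where S0: "is_dns V EJ S0" "length S0 = gamma_dns V EJ" using gamma_ex[OF finV(1)] by blast
  have up: "gamma_dns V EJ \<le> gamma_dns V1 E1 + has_isolated V1 E1" using J_upper[OF S0(1)] S0(2) le by simp
  have low: "gamma_dns V1 E1 + has_isolated V1 E1 \<le> gamma_dns V EJ"
  proof (cases "has_isolated V1 E1 = 0")
    case True
    then show ?thesis using gamma_ge[OF finV(1) J_G[OF dS]] lS by simp
  next
    case False
    then have i: "has_isolated V1 E1 = 1" using iso01 by metis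
    obtain h where "h \<in> V2" using ne2 by blast
    then show ?thesis using gamma_ge[OF finV(1) J_iso[OF dS i]] lS i by simp
  qed
  have eq: "gamma_dns V EJ = gamma_dns V1 E1 + has_isolated V1 E1" using up low by simp
  show ?thesis
  proof (intro conjI impI ballI)
    show "gamma_dns V EJ = gamma_dns V1 E1 + has_isolated V1 E1" by (rule eq)
  next
    assume "has_isolated V1 E1 = 0"
    then show "is_mdns V EJ S1" using mdns_iff[OF finV(1)] J_G[OF dS] lS eq by simp
  next
    fix h assume i: "has_isolated V1 E1 = 1" and h: "h \<in> V2"
    then show "is_mdns V EJ (S1@[h])" using mdns_iff[OF finV(1)] J_iso[OF dS i h] lS eq by simp
  qed
qed

lemma U_main: assumes m1: "is_mdns V1 E1 S1" and m2: "is_mdns V2 E2 S2"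
  shows "gamma_dns V EU = gamma_dns V1 E1 + gamma_dns V2 E2 \<and> is_mdns V EU (S1@S2)"
proof -
  interpret sw: two V2 V1 E2 E1 by (rule swap_two)
  have d1: "is_dns V1 E1 S1" and l1: "length S1 = gamma_dns V1 E1" using m1 mdns_iff[OF finV(2)] by auto
  have d2: "is_dns V2 E2 S2" and l2: "length S2 = gamma_dns V2 E2" using m2 mdns_iff[OF finV(3)] by auto
  have ub: "length S \<le> gamma_dns V1 E1 + gamma_dns V2 E2" if d: "is_dns V EU S" for S
  proof -
    have a: "is_dns V1 E1 (filter (\<lambda>y. y \<in> V1) S)" by (rule U_filter[OF d])
    have b: "is_dns V2 E2 (filter (\<lambda>y. y \<in> V2) S)" using sw.U_filter[unfolded eqs, OF d] .
    have sS: "set S \<subseteq> V" using d by (simp add: is_dns_def)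
    have fc: "filter (\<lambda>y. \<not> y \<in> V1) S = filter (\<lambda>y. y \<in> V2) S" using sS disj by (intro filter_cong) auto
    have "length S = length (filter (\<lambda>y. y \<in> V1) S) + length (filter (\<lambda>y. y \<in> V2) S)"
      using sum_length_filter_compl[of "\<lambda>y. y \<in> V1" S] fc by simp
    then show ?thesis using gamma_ge[OF finV(2) a] gamma_ge[OF finV(3) b] by simp
  qed
  have dU: "is_dns V EU (S1@S2)" by (rule U_app[OF d1 d2])
  obtain S0 where S0: "is_dns V EU S0" "length S0 = gamma_dns V EU" using gamma_ex[OF finV(1)] by blast
  have eq: "gamma_dns V EU = gamma_dns V1 E1 + gamma_dns V2 E2"
    using ub[OF S0(1)] S0(2) gamma_ge[OF finV(1) dU] l1 l2 by simp
  then show ?thesis using mdns_iff[OF finV(1)] dU l1 l2 by simp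
qed

end


theorem lemma4:
  fixes VG VH :: "'a set" and EG EH :: "'a \<Rightarrow> 'a \<Rightarrow> bool" and SG SH :: "'a list"
  assumes "graph VG EG" and "graph VH EH"
    and "VG \<noteq> {}" and "VH \<noteq> {}" and "VG \<inter> VH = {}"
    and "is_mdns VG EG SG" and "is_mdns VH EH SH"
  shows "gamma_dns (VG \<union> VH) (union_edges EG EH) = gamma_dns VG EG + gamma_dns VH EH
     \<and> is_mdns (VG \<union> VH) (union_edges EG EH) (SG @ SH)
     \<and> gamma_dns (VG \<union> VH) (join_edges VG EG VH EH)
         = max (gamma_dns VG EG + has_isolated VG EG) (gamma_dns VH EH + has_isolated VH EH)
     \<and> (gamma_dns VG EG + has_isolated VG EG \<ge> gamma_dns VH EH + has_isolated VH EH
          \<and> has_isolated VG EG = 0 \<longrightarrow> is_mdns (VG \<union> VH) (join_edges VG EG VH EH) SG)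
     \<and> (gamma_dns VG EG + has_isolated VG EG \<ge> gamma_dns VH EH + has_isolated VH EH
          \<and> has_isolated VG EG = 1 \<longrightarrow>
          (\<forall>h \<in> VH. is_mdns (VG \<union> VH) (join_edges VG EG VH EH) (SG @ [h])))
     \<and> (gamma_dns VG EG + has_isolated VG EG < gamma_dns VH EH + has_isolated VH EH
          \<and> has_isolated VH EH = 0 \<longrightarrow> is_mdns (VG \<union> VH) (join_edges VG EG VH EH) SH)
     \<and> (gamma_dns VG EG + has_isolated VG EG < gamma_dns VH EH + has_isolated VH EH
          \<and> has_isolated VH EH = 1 \<longrightarrow>
          (\<forall>g \<in> VG. is_mdns (VG \<union> VH) (join_edges VG EG VH EH) (SH @ [g])))"
proof -
  interpret t: two VG VH EG EH using assms by unfold_locales auto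
  interpret s: two VH VG EH EG by (rule t.swap_two)
  have U: "gamma_dns (VG \<union> VH) (union_edges EG EH) = gamma_dns VG EG + gamma_dns VH EH
     \<and> is_mdns (VG \<union> VH) (union_edges EG EH) (SG @ SH)" by (rule t.U_main[OF assms(6,7)])
  show ?thesis
  proof (cases "gamma_dns VH EH + has_isolated VH EH \<le> gamma_dns VG EG + has_isolated VG EG")
    case True
    note J = t.J_main[OF assms(6) True]
    show ?thesis using U J True by auto
  next
    case False
    then have le: "gamma_dns VG EG + has_isolated VG EG \<le> gamma_dns VH EH + has_isolated VH EH" by simp
    note J = s.J_main[unfolded t.eqs, OF assms(7) le]
    show ?thesis using U J False by auto
  qed
qed

end
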